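(* Let $\lambda$ be a positive integer, $k,\psi_0\in\mathbb{R}$, $F(\psi)=\frac{k}{\sin^2(\lambda\psi+\psi_0)}$ and $G(\psi)=\cos(\lambda\psi+\psi_0)$. Then for every $\nu\in\mathbb{N}$ the function $$\mathcal{X}_L^{\,\nu}\left(p_r+\frac{1}{\lambda r}\mathcal{X}_L\right)^\lambda G(\psi)$$ is a constant of motion of $H=\frac12p_r^2+\frac{1}{r^2}\left(\frac12p_\psi^2+F(\psi)\right)$.
   Context: Phase space coordinates are $(r,\psi,p_r,p_\psi)$ with $r>0$ and canonical Poisson bracket; dots denote derivatives in $\psi$. $L=\frac12p_\psi^2+F(\psi)$ and $\mathcal{X}_L=p_\psi\frac{\partial}{\partial\psi}-\dot F\frac{\partial}{\partial p_\psi}$ is its Hamiltonian vector field, viewed as a differential operator; $p_r$ and $\frac{1}{\lambda r}$ act by multiplication. A constant of motion is a function with vanishing Poisson bracket with $H$. *)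

theory Defs
  imports "HOL-Analysis.Analysis"
begin

text \<open>Phase-space functions of the coordinates (r, psi, p_r, p_psi).\<close>
type_synonym phase_fun = "real \<Rightarrow> real \<Rightarrow> real \<Rightarrow> real \<Rightarrow> real"

definition d_r :: "phase_fun \<Rightarrow> phase_fun" where
  "d_r f = (\<lambda>r psi pr ppsi. deriv (\<lambda>t. f t psi pr ppsi) r)"
definition d_psi :: "phase_fun \<Rightarrow> phase_fun" where
  "d_psi f = (\<lambda>r psi pr ppsi. deriv (\<lambda>t. f r t pr ppsi) psi)"
definition d_pr :: "phase_fun \<Rightarrow> phase_fun" where
  "d_pr f = (\<lambda>r psi pr ppsi. deriv (\<lambda>t. f r psi t ppsi) pr)"
definition d_ppsi :: "phase_fun \<Rightarrow> phase_fun" where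
  "d_ppsi f = (\<lambda>r psi pr ppsi. deriv (\<lambda>t. f r psi pr t) ppsi)"

definition poisson :: "phase_fun \<Rightarrow> phase_fun \<Rightarrow> phase_fun" where
  "poisson f g = (\<lambda>r psi pr ppsi.
     d_r f r psi pr ppsi * d_pr g r psi pr ppsi - d_pr f r psi pr ppsi * d_r g r psi pr ppsi
   + d_psi f r psi pr ppsi * d_ppsi g r psi pr ppsi - d_ppsi f r psi pr ppsi * d_psi g r psi pr ppsi)"

text \<open>Hamiltonian vector field of L = p_psi^2/2 + F(psi), as a differential operator:
  X_L = p_psi d/dpsi - F'(psi) d/dp_psi.\<close>
definition XL :: "(real \<Rightarrow> real) \<Rightarrow> phase_fun \<Rightarrow> phase_fun" where
  "XL F f = (\<lambda>r psi pr ppsi. ppsi * d_psi f r psi pr ppsi - deriv F psi * d_ppsi f r psi pr ppsi)"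

definition Aop :: "nat \<Rightarrow> (real \<Rightarrow> real) \<Rightarrow> phase_fun \<Rightarrow> phase_fun" where
  "Aop lam F f = (\<lambda>r psi pr ppsi. pr * f r psi pr ppsi + (1 / (real lam * r)) * XL F f r psi pr ppsi)"

definition Ham :: "(real \<Rightarrow> real) \<Rightarrow> phase_fun" where
  "Ham F = (\<lambda>r psi pr ppsi. pr^2 / 2 + (1 / r^2) * (ppsi^2 / 2 + F psi))"

end

theory Submission
  imports Defs
begin

type_synonym cf = "real \<Rightarrow> real \<Rightarrow> real \<Rightarrow> real"

definition Dr :: "cf \<Rightarrow> cf" where "Dr c = (\<lambda>r p l. deriv (\<lambda>t. c t p l) r)"
definition Dp :: "cf \<Rightarrow> cf" where "Dp c = (\<lambda>r p l. deriv (\<lambda>t. c r t l) p)"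
definition Dl :: "cf \<Rightarrow> cf" where "Dl c = (\<lambda>r p l. deriv (\<lambda>t. c r p t) l)"

definition good :: "cf \<Rightarrow> bool" where
 "good c \<longleftrightarrow> (\<forall>r p l. r > 0 \<longrightarrow> (\<lambda>t. c t p l) differentiable at r
    \<and> (\<lambda>t. c r t l) differentiable at p \<and> (\<lambda>t. c r p t) differentiable at l)"

lemma goodD: assumes "good c" "r>0" shows
 "((\<lambda>t. c t p l) has_real_derivative Dr c r p l) (at r)"
 "((\<lambda>t. c r t l) has_real_derivative Dp c r p l) (at p)"
 "((\<lambda>t. c r p t) has_real_derivative Dl c r p l) (at l)"
 using assms by (auto simp: good_def Dr_def Dp_def Dl_def DERIV_deriv_iff_real_differentiable)

lemma goodI:
  assumes "\<And>r p l. r > 0 \<Longrightarrow> \<exists>D. ((\<lambda>t. c t p l) has_real_derivative D) (at r)"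
    "\<And>r p l. r > 0 \<Longrightarrow> \<exists>D. ((\<lambda>t. c r t l) has_real_derivative D) (at p)"
    "\<And>r p l. r > 0 \<Longrightarrow> \<exists>D. ((\<lambda>t. c r p t) has_real_derivative D) (at l)"
  shows "good c"
  using assms unfolding good_def real_differentiable_def by blast

definition Ahat :: "cf \<times> cf \<Rightarrow> cf \<times> cf" where
 "Ahat c = (\<lambda>r p l. p * fst c r p l + 2 * l *  snd c r p l / r, \<lambda>r p l. p * snd c r p l - fst c r p l / r)"

definition Mop :: "nat \<Rightarrow> cf \<times> cf \<Rightarrow> cf \<times> cf" where
 "Mop lam c = (\<lambda>r p l. 2 * real lam * l *  snd c r p l, \<lambda>r p l. - real lam * fst c r p l)"

definition good2 :: "cf \<times> cf \<Rightarrow> bool" where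
  "good2 c \<longleftrightarrow> good (fst c) \<and> good (snd c)"

lemma good2_Ahat: assumes "good2 c" shows "good2 (Ahat c)"
proof -
  obtain a b where c: "c = (a,b)" by (cases c)
  have a: "good a" and b: "good b" using assms c by (auto simp: good2_def)
  show ?thesis unfolding good2_def Ahat_def c fst_conv snd_conv
    apply (intro conjI goodI exI)
    using goodD[OF a] goodD[OF b] by (auto intro!: derivative_eq_intros)
qed


lemma good2_Mop: assumes "good2 c" shows "good2 (Mop lam c)"
proof -
  obtain a b where c: "c = (a,b)" by (cases c)
  have a: "good a" and b: "good b" using assms c by (auto simp: good2_def)
  show ?thesis unfolding good2_def Mop_def c fst_conv snd_conv
    apply (intro conjI goodI exI)
    using goodD[OF a] goodD[OF b] by (auto intro!: derivative_eq_intros)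
qed

lemma good2_c0: "good2 (\<lambda>r p l. 1, \<lambda>r p l. 0)"
  unfolding good2_def by (auto intro!: goodI exI derivative_eq_intros)

definition inv1 :: "nat \<Rightarrow> cf \<times> cf \<Rightarrow> bool" where
 "inv1 n c \<longleftrightarrow> (\<forall>r p l. r > 0 \<longrightarrow>
    p * Dr (fst c) r p l + 2 * l / r^3 * Dp (fst c) r p l = - (real n / r^2) * (2 * l * snd c r p l)
  \<and> p * Dr (snd c) r p l + 2 * l / r^3 * Dp (snd c) r p l = real n / r^2 * fst c r p l)"

lemma inv1_c0: "inv1 0 (\<lambda>r p l. 1, \<lambda>r p l. 0)"
  unfolding inv1_def Dr_def Dp_def by simp

lemma inv1_Ahat: assumes "good2 c" "inv1 n c" shows "inv1 (Suc n) (Ahat c)"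
proof -
  obtain a b where c: "c = (a,b)" by (cases c)
  have a: "good a" and b: "good b" using assms c by (auto simp: good2_def)
  show ?thesis unfolding inv1_def
  proof (intro allI impI)
    fix r p l :: real assume r: "r > 0"
    note ga = goodD[OF a r] and gb = goodD[OF b r]
    have I: "p * Dr a r p l + 2 * l / r^3 * Dp a r p l = - (real n / r^2) * (2 * l * b r p l)"
      "p * Dr b r p l + 2 * l / r^3 * Dp b r p l = real n / r^2 * a r p l"
      using assms(2) r unfolding inv1_def c by auto
    have d1: "Dr (fst (Ahat c)) r p l = p * Dr a r p l + 2 * l * (Dr b r p l * r - b r p l) / r^2"
      unfolding Dr_def Ahat_def c fst_conv
      by (rule DERIV_imp_deriv, insert r ga(1) gb(1), auto intro!: derivative_eq_intros simp: power2_eq_square field_simps Dr_def Dp_def)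
    have d2: "Dp (fst (Ahat c)) r p l = a r p l + p * Dp a r p l + 2 * l * Dp b r p l / r"
      unfolding Dp_def Ahat_def c fst_conv
      by (rule DERIV_imp_deriv, insert r ga(2) gb(2), auto intro!: derivative_eq_intros simp: field_simps Dr_def Dp_def)
    have d3: "Dr (snd (Ahat c)) r p l = p * Dr b r p l - (Dr a r p l * r - a r p l) / r^2"
      unfolding Dr_def Ahat_def c snd_conv
      by (rule DERIV_imp_deriv, insert r ga(1) gb(1), auto intro!: derivative_eq_intros simp: power2_eq_square field_simps Dr_def Dp_def)
    have d4: "Dp (snd (Ahat c)) r p l = b r p l + p * Dp b r p l - Dp a r p l / r"
      unfolding Dp_def Ahat_def c snd_conv
      by (rule DERIV_imp_deriv, insert r ga(2) gb(2), auto intro!: derivative_eq_intros simp: field_simps Dr_def Dp_def)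
    have e1: "p * Dr a r p l = - (real n / r^2) * (2 * l * b r p l) - 2 * l / r^3 * Dp a r p l" using I(1) by linarith
    have e2: "p * Dr b r p l = real n / r^2 * a r p l - 2 * l / r^3 * Dp b r p l" using I(2) by linarith
    show "p * Dr (fst (Ahat c)) r p l + 2 * l / r ^ 3 * Dp (fst (Ahat c)) r p l =
          - (real (Suc n) / r\<^sup>2) * (2 * l * snd (Ahat c) r p l) \<and>
          p * Dr (snd (Ahat c)) r p l + 2 * l / r ^ 3 * Dp (snd (Ahat c)) r p l =
          real (Suc n) / r\<^sup>2 * fst (Ahat c) r p l"
    proof
      have "p * Dr (fst (Ahat c)) r p l + 2 * l / r ^ 3 * Dp (fst (Ahat c)) r p l
        = p * (p * Dr a r p l) + 2 * l / r * (p * Dr b r p l) - 2*l*p*b r p l / r^2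
          + 2 * l / r ^ 3 * (a r p l + p * Dp a r p l + 2 * l * Dp b r p l / r)"
        unfolding d1 d2 using r by (simp add: field_simps power2_eq_square power3_eq_cube)
      also have "\<dots> = - (real (Suc n) / r\<^sup>2) * (2 * l * snd (Ahat c) r p l)"
        unfolding e1 e2 Ahat_def c using r by (simp add: field_simps power2_eq_square power3_eq_cube)
      finally show "p * Dr (fst (Ahat c)) r p l + 2 * l / r ^ 3 * Dp (fst (Ahat c)) r p l =
          - (real (Suc n) / r\<^sup>2) * (2 * l * snd (Ahat c) r p l)" .
      have "p * Dr (snd (Ahat c)) r p l + 2 * l / r ^ 3 * Dp (snd (Ahat c)) r p l
        = p * (p * Dr b r p l) - 1 / r * (p * Dr a r p l) + p * a r p l / r^2
          + 2 * l / r ^ 3 * (b r p l + p * Dp b r p l - Dp a r p l / r)"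
        unfolding d3 d4 using r by (simp add: field_simps power2_eq_square power3_eq_cube)
      also have "\<dots> = real (Suc n) / r\<^sup>2 * fst (Ahat c) r p l"
        unfolding e1 e2 Ahat_def c using r by (simp add: field_simps power2_eq_square power3_eq_cube)
      finally show "p * Dr (snd (Ahat c)) r p l + 2 * l / r ^ 3 * Dp (snd (Ahat c)) r p l =
          real (Suc n) / r\<^sup>2 * fst (Ahat c) r p l" .
    qed
  qed
qed


definition Einv :: "nat \<Rightarrow> cf \<times> cf \<Rightarrow> bool" where
 "Einv lam c \<longleftrightarrow> (\<forall>r p l. r > 0 \<longrightarrow>
    p * Dr (fst c) r p l + 2 * l / r^3 * Dp (fst c) r p l + 2 * real lam * l / r^2 * snd c r p l = 0
  \<and> p * Dr (snd c) r p l + 2 * l / r^3 * Dp (snd c) r p l - real lam / r^2 * fst c r p l = 0)"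

lemma inv1_Einv: "inv1 lam c \<Longrightarrow> Einv lam c"
  unfolding inv1_def Einv_def by auto

lemma Einv_Mop: assumes "good2 c" "Einv lam c" shows "Einv lam (Mop lam c)"
proof -
  obtain a b where c: "c = (a,b)" by (cases c)
  have a: "good a" and b: "good b" using assms c by (auto simp: good2_def)
  show ?thesis unfolding Einv_def
  proof (intro allI impI)
    fix r p l :: real assume r: "r > 0"
    note ga = goodD[OF a r] and gb = goodD[OF b r]
    have I: "p * Dr a r p l + 2 * l / r^3 * Dp a r p l + 2 * real lam * l / r^2 * b r p l = 0"
      "p * Dr b r p l + 2 * l / r^3 * Dp b r p l - real lam / r^2 * a r p l = 0"
      using assms(2) r unfolding Einv_def c by auto
    have d1: "Dr (fst (Mop lam c)) r p l = 2 * real lam * l * Dr b r p l"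
      unfolding Dr_def Mop_def c fst_conv
      by (rule DERIV_imp_deriv, insert r ga(1) gb(1), auto intro!: derivative_eq_intros simp: Dr_def)
    have d2: "Dp (fst (Mop lam c)) r p l = 2 * real lam * l * Dp b r p l"
      unfolding Dp_def Mop_def c fst_conv
      by (rule DERIV_imp_deriv, insert r ga(2) gb(2), auto intro!: derivative_eq_intros simp: Dp_def)
    have d3: "Dr (snd (Mop lam c)) r p l = - real lam * Dr a r p l"
      unfolding Dr_def Mop_def c snd_conv
      by (rule DERIV_imp_deriv, insert r ga(1) gb(1), auto intro!: derivative_eq_intros simp: Dr_def)
    have d4: "Dp (snd (Mop lam c)) r p l = - real lam * Dp a r p l"
      unfolding Dp_def Mop_def c snd_conv
      by (rule DERIV_imp_deriv, insert r ga(2) gb(2), auto intro!: derivative_eq_intros simp: Dp_def)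
    have s1: "fst (Mop lam c) r p l = 2 * real lam * l * b r p l" "snd (Mop lam c) r p l = - real lam * a r p l"
      unfolding Mop_def c by auto
    have "p * Dr (fst (Mop lam c)) r p l + 2 * l / r^3 * Dp (fst (Mop lam c)) r p l + 2 * real lam * l / r^2 * snd (Mop lam c) r p l
       = 2 * real lam * l * (p * Dr b r p l + 2 * l / r^3 * Dp b r p l - real lam / r^2 * a r p l)"
      unfolding d1 d2 s1 by (simp add: algebra_simps)
    moreover have "p * Dr (snd (Mop lam c)) r p l + 2 * l / r^3 * Dp (snd (Mop lam c)) r p l - real lam / r^2 * fst (Mop lam c) r p l
       = - real lam * (p * Dr a r p l + 2 * l / r^3 * Dp a r p l + 2 * real lam * l / r^2 * b r p l)"
      unfolding d3 d4 s1 by (simp add: algebra_simps)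
    ultimately show "p * Dr (fst (Mop lam c)) r p l + 2 * l / r^3 * Dp (fst (Mop lam c)) r p l + 2 * real lam * l / r^2 * snd (Mop lam c) r p l = 0
     \<and> p * Dr (snd (Mop lam c)) r p l + 2 * l / r^3 * Dp (snd (Mop lam c)) r p l - real lam / r^2 * fst (Mop lam c) r p l = 0"
      using I by simp
  qed
qed

lemma iter_props:
  "good2 ((Ahat ^^ n) (\<lambda>r p l. 1, \<lambda>r p l. 0)) \<and> inv1 n ((Ahat ^^ n) (\<lambda>r p l. 1, \<lambda>r p l. 0))"
  by (induction n) (auto simp: good2_c0 inv1_c0 good2_Ahat inv1_Ahat)

lemma iterM_props: assumes "good2 c" "Einv lam c"
  shows "good2 ((Mop lam ^^ n) c) \<and> Einv lam ((Mop lam ^^ n) c)"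
  using assms by (induction n) (auto simp: good2_Mop Einv_Mop)


context
  fixes lam :: nat and k psi0 :: real and F :: "real \<Rightarrow> real"
  assumes lam: "lam > 0" and F: "F = (\<lambda>psi. k / (sin (real lam * psi + psi0))^2)"
begin

definition rep :: "cf \<times> cf \<Rightarrow> phase_fun" where
 "rep c = (\<lambda>r psi pr q. fst c r pr (q^2/2 + F psi) * cos (real lam * psi + psi0)
     + snd c r pr (q^2/2 + F psi) * (sin (real lam * psi + psi0) * q))"

definition agree :: "phase_fun \<Rightarrow> cf \<times> cf \<Rightarrow> bool" where
 "agree f c \<longleftrightarrow> (\<forall>r psi pr q. r > 0 \<longrightarrow> sin (real lam * psi + psi0) \<noteq> 0 \<longrightarrow> f r psi pr q = rep c r psi pr q)"

lemma F_deriv: assumes "sin (real lam * psi + psi0) \<noteq> 0"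
  shows "(F has_real_derivative (- 2 * k * real lam * cos (real lam * psi + psi0) / (sin (real lam * psi + psi0))^3)) (at psi)"
  unfolding F using assms
  by (auto intro!: derivative_eq_intros simp: field_simps power2_eq_square power3_eq_cube)

lemma ev_psi: assumes "sin (real lam * psi + psi0) \<noteq> 0"
  shows "eventually (\<lambda>t. sin (real lam * t + psi0) \<noteq> 0) (nhds psi)"
proof -
  have "open {t. sin (real lam * t + psi0) \<noteq> 0}"
    by (intro open_Collect_neq continuous_intros)
  from eventually_nhds_in_open[OF this] assms show ?thesis by auto
qed

lemma ev_r: assumes "(r::real) > 0" shows "eventually (\<lambda>t. t > 0) (nhds r)"
  using eventually_nhds_in_open[OF open_greaterThan[of 0]] assms by auto


lemma dpsi_agree:
  fixes q :: real
  assumes c: "good2 c" and ag: "agree f c" and r: "r > 0" and s: "sin (real lam * psi + psi0) \<noteq> 0"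
  defines "l \<equiv> q^2/2 + F psi"
  shows "d_psi f r psi pr q =
     Dl (fst c) r pr l * deriv F psi * cos (real lam * psi + psi0) - real lam * fst c r pr l * sin (real lam * psi + psi0)
   + Dl (snd c) r pr l * deriv F psi * (sin (real lam * psi + psi0) * q) + real lam * snd c r pr l * cos (real lam * psi + psi0) * q" (is "_ = ?rhs")
proof -
  have a: "good (fst c)" and b: "good (snd c)" using c by (auto simp: good2_def)
  have hF: "(F has_real_derivative deriv F psi) (at psi)"
    using F_deriv[OF s] DERIV_imp_deriv by metis
  have hL: "((\<lambda>t. q^2/2 + F t) has_real_derivative deriv F psi) (at psi)"
    by (auto intro!: derivative_eq_intros hF)
  have ha: "((\<lambda>t. fst c r pr (q^2/2 + F t)) has_real_derivative Dl (fst c) r pr l * deriv F psi) (at psi)"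
    unfolding l_def by (rule DERIV_chain2[OF goodD(3)[OF a r] hL])
  have hb: "((\<lambda>t. snd c r pr (q^2/2 + F t)) has_real_derivative Dl (snd c) r pr l * deriv F psi) (at psi)"
    unfolding l_def by (rule DERIV_chain2[OF goodD(3)[OF b r] hL])
  have "d_psi f r psi pr q = deriv (\<lambda>t. rep c r t pr q) psi"
    unfolding d_psi_def
    by (rule deriv_cong_ev[OF eventually_mono[OF ev_psi[OF s]] refl]) (use ag r in \<open>auto simp: agree_def\<close>)
  also have "\<dots> = ?rhs"
  proof -
    define A where "A = (\<lambda>t. fst c r pr (q^2/2 + F t))"
    define B where "B = (\<lambda>t. snd c r pr (q^2/2 + F t))"
    have ha': "(A has_real_derivative Dl (fst c) r pr l * deriv F psi) (at psi)" using ha unfolding A_def .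
    have hb': "(B has_real_derivative Dl (snd c) r pr l * deriv F psi) (at psi)" using hb unfolding B_def .
    have Ap: "A psi = fst c r pr l" and Bp: "B psi = snd c r pr l" unfolding A_def B_def l_def by simp_all
    have e: "(\<lambda>t. rep c r t pr q) = (\<lambda>t. A t * cos (real lam * t + psi0) + B t * (sin (real lam * t + psi0) * q))"
      unfolding rep_def A_def B_def by simp
    show ?thesis unfolding e
      by (rule DERIV_imp_deriv) (auto intro!: derivative_eq_intros ha' hb' simp: Ap Bp algebra_simps)
  qed
  finally show ?thesis .
qed


lemma dppsi_agree:
  fixes q :: real
  assumes c: "good2 c" and ag: "agree f c" and r: "r > 0" and s: "sin (real lam * psi + psi0) \<noteq> 0"
  defines "l \<equiv> q^2/2 + F psi"
  shows "d_ppsi f r psi pr q =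
     Dl (fst c) r pr l * q * cos (real lam * psi + psi0)
   + Dl (snd c) r pr l * q * (sin (real lam * psi + psi0) * q) + snd c r pr l * sin (real lam * psi + psi0)" (is "_ = ?rhs")
proof -
  have a: "good (fst c)" and b: "good (snd c)" using c by (auto simp: good2_def)
  have hL: "((\<lambda>t. t^2/2 + F psi) has_real_derivative q) (at q)"
    by (auto intro!: derivative_eq_intros)
  define A where "A = (\<lambda>t. fst c r pr (t^2/2 + F psi))"
  define B where "B = (\<lambda>t. snd c r pr (t^2/2 + F psi))"
  have ha': "(A has_real_derivative Dl (fst c) r pr l * q) (at q)"
    unfolding l_def A_def by (rule DERIV_chain2[OF goodD(3)[OF a r] hL])
  have hb': "(B has_real_derivative Dl (snd c) r pr l * q) (at q)"
    unfolding l_def B_def by (rule DERIV_chain2[OF goodD(3)[OF b r] hL])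
  have Ap: "A q = fst c r pr l" and Bp: "B q = snd c r pr l" unfolding A_def B_def l_def by simp_all
  have "d_ppsi f r psi pr q = deriv (\<lambda>t. rep c r psi pr t) q"
  proof -
    have "(\<lambda>t. f r psi pr t) = (\<lambda>t. rep c r psi pr t)" using ag r s by (simp add: agree_def)
    then show ?thesis unfolding d_ppsi_def by simp
  qed
  also have e: "(\<lambda>t. rep c r psi pr t) = (\<lambda>t. A t * cos (real lam * psi + psi0) + B t * (sin (real lam * psi + psi0) * t))"
      unfolding rep_def A_def B_def by simp
  also have "deriv \<dots> q = ?rhs"
    by (rule DERIV_imp_deriv) (auto intro!: derivative_eq_intros ha' hb' simp: Ap Bp algebra_simps)
  finally show ?thesis .
qed

lemma dr_agree:
  fixes q :: real
  assumes c: "good2 c" and ag: "agree f c" and r: "r > 0" and s: "sin (real lam * psi + psi0) \<noteq> 0"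
  defines "l \<equiv> q^2/2 + F psi"
  shows "d_r f r psi pr q =
     Dr (fst c) r pr l * cos (real lam * psi + psi0)
   + Dr (snd c) r pr l * (sin (real lam * psi + psi0) * q)" (is "_ = ?rhs")
proof -
  have a: "good (fst c)" and b: "good (snd c)" using c by (auto simp: good2_def)
  define A where "A = (\<lambda>t. fst c t pr l)"
  define B where "B = (\<lambda>t. snd c t pr l)"
  have ha': "(A has_real_derivative Dr (fst c) r pr l) (at r)"
    unfolding A_def by (rule goodD(1)[OF a r])
  have hb': "(B has_real_derivative Dr (snd c) r pr l) (at r)"
    unfolding B_def by (rule goodD(1)[OF b r])
  have "d_r f r psi pr q = deriv (\<lambda>t. rep c t psi pr q) r"
    unfolding d_r_def
    by (rule deriv_cong_ev[OF eventually_mono[OF ev_r[OF r]] refl]) (use ag s in \<open>auto simp: agree_def\<close>)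
  also have e: "(\<lambda>t. rep c t psi pr q) = (\<lambda>t. A t * cos (real lam * psi + psi0) + B t * (sin (real lam * psi + psi0) * q))"
      unfolding rep_def A_def B_def l_def by simp
  also have "deriv \<dots> r = ?rhs"
    by (rule DERIV_imp_deriv) (auto intro!: derivative_eq_intros ha' hb' simp: algebra_simps)
  finally show ?thesis .
qed

lemma dpr_agree:
  fixes q :: real
  assumes c: "good2 c" and ag: "agree f c" and r: "r > 0" and s: "sin (real lam * psi + psi0) \<noteq> 0"
  defines "l \<equiv> q^2/2 + F psi"
  shows "d_pr f r psi pr q =
     Dp (fst c) r pr l * cos (real lam * psi + psi0)
   + Dp (snd c) r pr l * (sin (real lam * psi + psi0) * q)" (is "_ = ?rhs")
proof -
  have a: "good (fst c)" and b: "good (snd c)" using c by (auto simp: good2_def)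
  define A where "A = (\<lambda>t. fst c r t l)"
  define B where "B = (\<lambda>t. snd c r t l)"
  have ha': "(A has_real_derivative Dp (fst c) r pr l) (at pr)"
    unfolding A_def by (rule goodD(2)[OF a r])
  have hb': "(B has_real_derivative Dp (snd c) r pr l) (at pr)"
    unfolding B_def by (rule goodD(2)[OF b r])
  have "d_pr f r psi pr q = deriv (\<lambda>t. rep c r psi t q) pr"
  proof -
    have "(\<lambda>t. f r psi t q) = (\<lambda>t. rep c r psi t q)" using ag r s by (simp add: agree_def)
    then show ?thesis unfolding d_pr_def by simp
  qed
  also have e: "(\<lambda>t. rep c r psi t q) = (\<lambda>t. A t * cos (real lam * psi + psi0) + B t * (sin (real lam * psi + psi0) * q))"
      unfolding rep_def A_def B_def l_def by simp
  also have "deriv \<dots> pr = ?rhs"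
    by (rule DERIV_imp_deriv) (auto intro!: derivative_eq_intros ha' hb' simp: algebra_simps)
  finally show ?thesis .
qed

lemma XL_agree:
  assumes c: "good2 c" and ag: "agree f c"
  shows "agree (XL F f) (Mop lam c)"
  unfolding agree_def
proof (intro allI impI)
  fix r psi pr q :: real assume r: "r > 0" and s: "sin (real lam * psi + psi0) \<noteq> 0"
  have dF: "deriv F psi = - 2 * k * real lam * cos (real lam * psi + psi0) / (sin (real lam * psi + psi0))^3"
    by (rule DERIV_imp_deriv[OF F_deriv[OF s]])
  have Fp: "F psi = k / (sin (real lam * psi + psi0))^2" by (simp add: F)
  show "XL F f r psi pr q = rep (Mop lam c) r psi pr q"
    unfolding XL_def dpsi_agree[OF c ag r s] dppsi_agree[OF c ag r s]
    unfolding rep_def Mop_def fst_conv snd_conv dF Fp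
    using s by (simp add: field_simps power2_eq_square power3_eq_cube)
qed


lemma Aop_agree:
  assumes c: "good2 c" and ag: "agree f c"
  shows "agree (Aop lam F f) (Ahat c)"
  unfolding agree_def
proof (intro allI impI)
  fix r psi pr q :: real assume r: "r > 0" and s: "sin (real lam * psi + psi0) \<noteq> 0"
  have X: "XL F f r psi pr q = rep (Mop lam c) r psi pr q"
    using XL_agree[OF c ag] r s by (simp add: agree_def)
  have f: "f r psi pr q = rep c r psi pr q" using ag r s by (simp add: agree_def)
  show "Aop lam F f r psi pr q = rep (Ahat c) r psi pr q"
    unfolding Aop_def X f unfolding rep_def Mop_def Ahat_def fst_conv snd_conv
    using r lam by (simp add: field_simps)
qed

lemma poisson_agree:
  assumes c: "good2 c" and ag: "agree f c" and E: "Einv lam c"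
    and r: "r > 0" and s: "sin (real lam * psi + psi0) \<noteq> 0"
  shows "poisson f (Ham F) r psi pr q = 0"
proof -
  define l where "l = q^2/2 + F psi"
  have hF: "(F has_real_derivative deriv F psi) (at psi)"
    using F_deriv[OF s] DERIV_imp_deriv by metis
  have H1: "d_r (Ham F) r psi pr q = - 2 / r^3 * l"
    unfolding d_r_def Ham_def l_def
    by (rule DERIV_imp_deriv) (use r in \<open>auto intro!: derivative_eq_intros simp: field_simps power2_eq_square power3_eq_cube\<close>)
  have H2: "d_pr (Ham F) r psi pr q = pr"
    unfolding d_pr_def Ham_def
    by (rule DERIV_imp_deriv) (auto intro!: derivative_eq_intros)
  have H3: "d_psi (Ham F) r psi pr q = deriv F psi / r^2"
    unfolding d_psi_def Ham_def
    by (rule DERIV_imp_deriv) (use r in \<open>auto intro!: derivative_eq_intros hF simp: field_simps\<close>)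
  have H4: "d_ppsi (Ham F) r psi pr q = q / r^2"
    unfolding d_ppsi_def Ham_def
    by (rule DERIV_imp_deriv) (use r in \<open>auto intro!: derivative_eq_intros simp: field_simps\<close>)
  have X: "XL F f r psi pr q = rep (Mop lam c) r psi pr q"
    using XL_agree[OF c ag] r s by (simp add: agree_def)
  have P: "poisson f (Ham F) r psi pr q = pr * d_r f r psi pr q + 2 * l / r^3 * d_pr f r psi pr q + XL F f r psi pr q / r^2"
    unfolding poisson_def XL_def H1 H2 H3 H4 by (simp add: diff_divide_distrib algebra_simps)
  obtain a b where cab: "c = (a,b)" by (cases c)
  have E1: "pr * Dr a r pr l + 2 * l / r^3 * Dp a r pr l + 2 * real lam * l / r^2 * b r pr l = 0"
   and E2: "pr * Dr b r pr l + 2 * l / r^3 * Dp b r pr l - real lam / r^2 * a r pr l = 0"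
    using E r unfolding Einv_def cab by auto
  have "poisson f (Ham F) r psi pr q =
     cos (real lam * psi + psi0) * (pr * Dr a r pr l + 2 * l / r^3 * Dp a r pr l + 2 * real lam * l / r^2 * b r pr l)
   + sin (real lam * psi + psi0) * q * (pr * Dr b r pr l + 2 * l / r^3 * Dp b r pr l - real lam / r^2 * a r pr l)"
    unfolding P X dr_agree[OF c ag r s] dpr_agree[OF c ag r s] l_def[symmetric]
    unfolding rep_def Mop_def cab fst_conv snd_conv l_def[symmetric]
    by (simp add: algebra_simps diff_divide_distrib add_divide_distrib)
  then show ?thesis using E1 E2 by simp
qed

end

theorem mainTheorem4:
  fixes lam :: nat and k psi0 :: real and nu :: nat
    and F G :: "real \<Rightarrow> real"
  assumes "lam > 0"
    and "F = (\<lambda>psi. k / (sin (real lam * psi + psi0))^2)"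
    and "G = (\<lambda>psi. cos (real lam * psi + psi0))"
  shows "\<forall>r psi pr ppsi. r > 0 \<longrightarrow> sin (real lam * psi + psi0) \<noteq> 0 \<longrightarrow>
    poisson (((XL F) ^^ nu) (((Aop lam F) ^^ lam) (\<lambda>r psi pr ppsi. G psi))) (Ham F)
      r psi pr ppsi = 0"
proof (intro allI impI)
  fix r psi pr ppsi :: real
  assume r: "r > 0" and s: "sin (real lam * psi + psi0) \<noteq> 0"
  note l = assms(1) and Fd = assms(2)
  define c0 :: "cf \<times> cf" where "c0 = (\<lambda>r p l. 1, \<lambda>r p l. 0)"
  have A0: "agree lam psi0 F (\<lambda>r psi pr ppsi. G psi) c0"
    unfolding agree_def[OF l Fd] rep_def[OF l Fd] c0_def assms(3) by simp
  have A1: "good2 ((Ahat ^^ n) c0) \<and> agree lam psi0 F (((Aop lam F) ^^ n) (\<lambda>r psi pr ppsi. G psi)) ((Ahat ^^ n) c0)" for n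
  proof (induction n)
    case 0 then show ?case using A0 good2_c0 by (simp add: c0_def)
  next
    case (Suc n) then show ?case
      using good2_Ahat Aop_agree[OF l Fd] by simp
  qed
  define c1 where "c1 = (Ahat ^^ lam) c0"
  have g1: "good2 c1" and E1: "Einv lam c1"
    using iter_props[of lam] A1[of lam] inv1_Einv unfolding c1_def c0_def by auto
  have A2: "good2 ((Mop lam ^^ n) c1) \<and> Einv lam ((Mop lam ^^ n) c1) \<and>
     agree lam psi0 F (((XL F) ^^ n) (((Aop lam F) ^^ lam) (\<lambda>r psi pr ppsi. G psi))) ((Mop lam ^^ n) c1)" for n
  proof (induction n)
    case 0 then show ?case using A1[of lam] g1 E1 by (simp add: c1_def)
  next
    case (Suc n) then show ?case
      using good2_Mop Einv_Mop XL_agree[OF l Fd] by simp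
  qed
  show "poisson (((XL F) ^^ nu) (((Aop lam F) ^^ lam) (\<lambda>r psi pr ppsi. G psi))) (Ham F) r psi pr ppsi = 0"
    using poisson_agree[OF l Fd _ _ _ r s] A2[of nu] by blast
qed

end
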